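(* Let $\beta\in(0,1)$, $x^1\ge0$, $C:\mathbb{R}_+\to\mathbb{R}_+$ increasing, strictly convex and continuously differentiable with $c=C'$, $\lim_{x\to\infty}c(x)=\infty$. Let $\mathbb{P}$ be a probability distribution with nonnegative support, finite mean, and no atoms, and $\boldsymbol{p}^1,\boldsymbol{p}^2,\ldots$ i.i.d. with law $\mathbb{P}$. Fix samples $p_1,\ldots,p_N$ and define $y_{\mathrm{S}}$ and $y_{\mathrm{M}}$ as in the context. Then the out-of-sample value functions $\bar V_{\mathrm{S}}$ and $\bar V_{\mathrm{M}}$ are differentiable.
   Context: $c^{-1}$ is the inverse of $c$ on its range, $(z)_{[a,b]}$ the projection onto $[a,b]$, $(z)_+=\max\{z,0\}$, $\mu_N=\frac1N\sum_i p_i$. $y_{\mathrm{S}}(x,p)=c^{-1}((\beta\frac1N\sum_{i=1}^N(p_i-p)_+-(1-\beta)p)_{[c(0),c(x)]})$, $y_{\mathrm{M}}(x,p)=c^{-1}((\beta(\mu_N-p)_+-(1-\beta)p)_{[c(0),c(x)]})$. For a policy $y$, $\bar V_y(x)=\mathbb{E}_{\mathbb{P}^\infty}[\sum_{t=1}^\infty\beta^{t-1}(\boldsymbol{p}^t(x^t-x^{t+1})-C(x^{t+1}))]$ with $x^1=x$, $x^{t+1}=y(x^t,\boldsymbol{p}^t)$; $\bar V_{\mathrm{S}}=\bar V_{y_{\mathrm{S}}}$, $\bar V_{\mathrm{M}}=\bar V_{y_{\mathrm{M}}}$, as functions of $x\in[0,x^1]$. *)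

theory Defs
  imports "HOL-Probability.Probability"
begin

definition strictly_convex_on :: "real set \<Rightarrow> (real \<Rightarrow> real) \<Rightarrow> bool" where
  "strictly_convex_on S f \<longleftrightarrow>
     (\<forall>x\<in>S. \<forall>y\<in>S. \<forall>u::real. x \<noteq> y \<and> 0 < u \<and> u < 1 \<longrightarrow>
        f (u * x + (1 - u) * y) < u * f x + (1 - u) * f y)"

definition proj :: "real \<Rightarrow> real \<Rightarrow> real \<Rightarrow> real" where
  "proj a b z = max a (min b z)"

definition cinv :: "(real \<Rightarrow> real) \<Rightarrow> real \<Rightarrow> real" where
  "cinv c = inv_into {0..} c"

definition y_S :: "(real \<Rightarrow> real) \<Rightarrow> real \<Rightarrow> nat \<Rightarrow> (nat \<Rightarrow> real) \<Rightarrow> real \<Rightarrow> real \<Rightarrow> real" where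
  "y_S c \<beta> N ps x q =
     cinv c (proj (c 0) (c x)
       (\<beta> * ((1 / real N) * (\<Sum>i=1..N. max (ps i - q) 0)) - (1 - \<beta>) * q))"

definition mu_N :: "nat \<Rightarrow> (nat \<Rightarrow> real) \<Rightarrow> real" where
  "mu_N N ps = (1 / real N) * (\<Sum>i=1..N. ps i)"

definition y_M :: "(real \<Rightarrow> real) \<Rightarrow> real \<Rightarrow> nat \<Rightarrow> (nat \<Rightarrow> real) \<Rightarrow> real \<Rightarrow> real \<Rightarrow> real" where
  "y_M c \<beta> N ps x q =
     cinv c (proj (c 0) (c x) (\<beta> * max (mu_N N ps - q) 0 - (1 - \<beta>) * q))"

(* trajectory: traj y x \<omega> t = x^{t+1}, with \<omega> t = p^{t+1} *)
primrec traj :: "(real \<Rightarrow> real \<Rightarrow> real) \<Rightarrow> real \<Rightarrow> (nat \<Rightarrow> real) \<Rightarrow> nat \<Rightarrow> real" where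
  "traj y x \<omega> 0 = x"
| "traj y x \<omega> (Suc t) = y (traj y x \<omega> t) (\<omega> t)"

definition Vbar :: "(real \<Rightarrow> real) \<Rightarrow> real \<Rightarrow> real measure \<Rightarrow> (real \<Rightarrow> real \<Rightarrow> real) \<Rightarrow> real \<Rightarrow> real" where
  "Vbar C \<beta> P y x =
     integral\<^sup>L (Pi\<^sub>M UNIV (\<lambda>_::nat. P))
       (\<lambda>\<omega>. \<Sum>t. \<beta> ^ t * (\<omega> t * (traj y x \<omega> t - traj y x \<omega> (Suc t))
                              - C (traj y x \<omega> (Suc t))))"

end

theory Submission
  imports Defs
begin

lemma sconv_convex:
  assumes "strictly_convex_on {0..} C"
  shows "convex_on {0..} C"
proof (rule convex_onI)
  fix t x y :: real assume t: "t > 0" "t < 1" and xy: "x \<in> {0..}" "y \<in> {0..}"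
  show "C ((1 - t) *\<^sub>R x + t *\<^sub>R y) \<le> (1 - t) * C x + t * C y"
  proof (cases "x = y")
    case True then show ?thesis by (simp add: algebra_simps)
  next
    case False
    show ?thesis
      using assms[unfolded strictly_convex_on_def, rule_format, of x y "1-t"] xy t False by simp
  qed
qed (simp add: convex_real_interval)

lemma c_strict_pos:
  assumes sc: "strictly_convex_on {0..} C"
    and d: "\<forall>x\<ge>0. (C has_real_derivative c x) (at x within {0..})"
    and a: "0 < a" "a < b"
  shows "c a < c b"
proof -
  have cv: "convex_on {0..} C" using sconv_convex[OF sc] .
  define m where "m = (a + b) / 2"
  have m: "a < m" "m < b" using a by (auto simp: m_def)
  have int: "interior {0::real..} = {0<..}" by simp
  have t1: "C m - C a \<ge> c a * (m - a)"
    by (rule convex_on_imp_above_tangent[OF cv]) (use a m d in \<open>auto simp: int\<close>)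
  have t2: "C m - C b \<ge> c b * (m - b)"
    by (rule convex_on_imp_above_tangent[OF cv]) (use a m d in \<open>auto simp: int\<close>)
  have "C ((1/2) * a + (1 - 1/2) * b) < (1/2) * C a + (1 - 1/2) * C b"
    using sc[unfolded strictly_convex_on_def, rule_format, of a b "1/2"] a by simp
  moreover have "(1/2) * a + (1 - 1/2) * b = m" by (simp add: m_def)
  ultimately have s: "2 * C m < C a + C b" by simp
  have mb: "m - b = -(m - a)" unfolding m_def by (simp add: field_simps)
  have "c b * (m - b) = - (c b * (m - a))" unfolding mb by (simp only: mult_minus_right)
  then have t2': "C b - C m \<le> c b * (m - a)" using t2 by linarith
  have "c a * (m - a) < c b * (m - a)" using t1 t2' s by linarith
  then show ?thesis using m by simp
qed

lemma c_strict:
  assumes sc: "strictly_convex_on {0..} C"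
    and d: "\<forall>x\<ge>0. (C has_real_derivative c x) (at x within {0..})"
    and cc: "continuous_on {0..} c"
    and a: "0 \<le> a" "a < b"
  shows "c a < c b"
proof (cases "a = 0")
  case False then show ?thesis using c_strict_pos[OF sc d] a by auto
next
  case True
  define m where "m = b / 2"
  have m: "0 < m" "m < b" using a True by (auto simp: m_def)
  have cmb: "c m < c b" using c_strict_pos[OF sc d m] .
  have lim: "(c \<longlongrightarrow> c 0) (at_right 0)"
  proof -
    have "(c \<longlongrightarrow> c 0) (at 0 within {0..})"
      using cc by (simp add: continuous_on_def)
    then show ?thesis
      by (rule filterlim_mono) (auto simp: at_within_le_at intro!: at_le)
  qed
  have "c 0 \<le> c m"
  proof (rule tendsto_upperbound[OF lim])
    show "\<forall>\<^sub>F x in at_right 0. c x \<le> c m"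
      unfolding eventually_at_right_field
      using m c_strict_pos[OF sc d] by (intro exI[of _ m]) (auto intro: less_imp_le)
  qed simp
  then show ?thesis using cmb True by simp
qed


context
  fixes c :: "real \<Rightarrow> real"
  assumes cs: "\<And>a b. 0 \<le> a \<Longrightarrow> a < b \<Longrightarrow> c a < c b"
    and cc: "continuous_on {0..} c"
    and cl: "filterlim c at_top at_top"
begin

lemma c_le_iff: "0 \<le> a \<Longrightarrow> 0 \<le> b \<Longrightarrow> c a \<le> c b \<longleftrightarrow> a \<le> b"
proof -
  assume ab: "0 \<le> a" "0 \<le> b"
  show ?thesis
  proof
    assume "c a \<le> c b"
    then show "a \<le> b" using cs[of b a] ab by (meson not_le)
  next
    assume "a \<le> b"
    then show "c a \<le> c b" using cs[of a b] ab by (cases "a = b") auto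
  qed
qed

lemma c_surj: "c 0 \<le> v \<Longrightarrow> v \<in> c ` {0..}"
proof -
  assume v: "c 0 \<le> v"
  from cl have "eventually (\<lambda>x. c x \<ge> v) at_top" by (simp add: filterlim_at_top)
  then obtain b0 where b0: "\<And>x. x \<ge> b0 \<Longrightarrow> c x \<ge> v" by (auto simp: eventually_at_top_linorder)
  define b where "b = max b0 0"
  have "c b \<ge> v" "b \<ge> 0" using b0 by (auto simp: b_def)
  moreover have "continuous_on {0..b} c" using cc by (rule continuous_on_subset) auto
  ultimately obtain u where "0 \<le> u" "u \<le> b" "c u = v" using IVT'[of c 0 v b] v by auto
  then show ?thesis by auto
qed

lemma c_inj: "inj_on c {0..}"
  by (rule inj_onI) (metis atLeast_iff cs less_irrefl linorder_cases)

lemma cinv_ge: "c 0 \<le> v \<Longrightarrow> 0 \<le> cinv c v"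
  unfolding cinv_def using c_surj by (meson atLeast_iff inv_into_into)

lemma c_cinv: "c 0 \<le> v \<Longrightarrow> c (cinv c v) = v"
  unfolding cinv_def using c_surj by (meson f_inv_into_f)

lemma cinv_c: "0 \<le> u \<Longrightarrow> cinv c (c u) = u"
  unfolding cinv_def using c_inj by (simp add: inv_into_f_f)

definition wf :: "real \<Rightarrow> real" where "wf v = cinv c (max (c 0) v)"

lemma wf_ge: "0 \<le> wf v" unfolding wf_def by (rule cinv_ge) simp

lemma c_wf: "c (wf v) = max (c 0) v" unfolding wf_def by (rule c_cinv) simp

lemma wf_mono: "mono wf"
proof (rule monoI)
  fix a b :: real assume "a \<le> b"
  then have "c (wf a) \<le> c (wf b)" by (simp add: c_wf)
  then show "wf a \<le> wf b" using c_le_iff wf_ge by blast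
qed

lemma wf_meas: "wf \<in> borel_measurable borel"
  using wf_mono by (rule borel_measurable_mono)

lemma proj_eq: "0 \<le> x \<Longrightarrow> cinv c (proj (c 0) (c x) v) = min x (wf v)"
proof -
  assume x: "0 \<le> x"
  have c0x: "c 0 \<le> c x" using c_le_iff x by simp
  show ?thesis
  proof (cases "max (c 0) v \<le> c x")
    case True
    then have "proj (c 0) (c x) v = max (c 0) v" unfolding proj_def by auto
    moreover have "wf v \<le> x" using True c_wf c_le_iff[OF wf_ge x] by simp
    ultimately show ?thesis by (simp add: wf_def min_def)
  next
    case False
    then have "proj (c 0) (c x) v = c x" unfolding proj_def using c0x by auto
    moreover have "c x \<le> c (wf v)" using False c_wf[of v] c0x by auto
    then have "x \<le> wf v" using c_le_iff[OF x wf_ge] by simp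
    ultimately show ?thesis using cinv_c[OF x] by (simp add: min_def)
  qed
qed

lemma wf_atom: "0 < u \<Longrightarrow> wf v = u \<Longrightarrow> v = c u"
proof -
  assume u: "0 < u" "wf v = u"
  have "c 0 < c u" using cs u by simp
  moreover have "c u = max (c 0) v" by (metis c_wf u(2))
  ultimately show ?thesis by (simp add: max_def split: if_splits)
qed

end

lemma AE_noteq_antimono:
  fixes P :: "real measure" and h :: "real \<Rightarrow> real"
  assumes P_prob: "prob_space P" and P_borel: "sets P = sets borel"
    and noat: "\<forall>q. measure P {q} = 0"
    and h: "\<And>a b. a < b \<Longrightarrow> h b < h a"
  shows "AE q in P. h q \<noteq> v"
proof (cases "\<exists>q0. h q0 = v")
  case False then show ?thesis by auto
next
  case True
  then obtain q0 where q0: "h q0 = v" by auto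
  interpret prob_space P by (rule P_prob)
  have "{q0} \<in> null_sets P"
  proof
    show "{q0} \<in> sets P" using P_borel by simp
    show "emeasure P {q0} = 0"
      using emeasure_eq_measure noat by simp
  qed
  moreover have "{q \<in> space P. \<not> h q \<noteq> v} \<subseteq> {q0}"
    using h q0 by (auto, metis less_irrefl linorder_cases)
  ultimately show ?thesis by (rule AE_I')
qed


lemma deriv_under_integral:
  fixes M :: "'a measure" and f :: "real \<Rightarrow> 'a \<Rightarrow> real" and f' L :: "'a \<Rightarrow> real"
  assumes x: "x \<in> S"
    and fi: "\<And>a. a \<in> S \<Longrightarrow> integrable M (f a)"
    and Li: "integrable M L"
    and f'm: "f' \<in> borel_measurable M"
    and der: "AE \<omega> in M. ((\<lambda>a. f a \<omega>) has_field_derivative f' \<omega>) (at x within S)"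
    and lip: "AE \<omega> in M. \<forall>a\<in>S. \<bar>f a \<omega> - f x \<omega>\<bar> \<le> L \<omega> * \<bar>a - x\<bar>"
  shows "((\<lambda>a. integral\<^sup>L M (f a)) has_field_derivative integral\<^sup>L M f') (at x within S)"
proof -
  have "((\<lambda>a. (integral\<^sup>L M (f a) - integral\<^sup>L M (f x)) / (a - x)) \<longlongrightarrow> integral\<^sup>L M f') (at x within S)"
    unfolding tendsto_at_iff_sequentially comp_def
  proof (intro allI impI)
    fix X assume X: "\<forall>i. X i \<in> S - {x}" "X \<longlonglongrightarrow> x"
    have eq: "(integral\<^sup>L M (f (X i)) - integral\<^sup>L M (f x)) / (X i - x)
        = (\<integral>\<omega>. (f (X i) \<omega> - f x \<omega>) / (X i - x) \<partial>M)" for i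
      using fi X x by (simp add: integral_diff)
    have "(\<lambda>i. \<integral>\<omega>. (f (X i) \<omega> - f x \<omega>) / (X i - x) \<partial>M) \<longlonglongrightarrow> integral\<^sup>L M f'"
    proof (rule integral_dominated_convergence[where w=L])
      show "f' \<in> borel_measurable M" by fact
      show "(\<lambda>\<omega>. (f (X i) \<omega> - f x \<omega>) / (X i - x)) \<in> borel_measurable M" for i
        using fi X x by (intro borel_measurable_divide borel_measurable_diff borel_measurable_integrable) auto
      show "integrable M L" by fact
      show "AE \<omega> in M. (\<lambda>i. (f (X i) \<omega> - f x \<omega>) / (X i - x)) \<longlonglongrightarrow> f' \<omega>"
        using der
      proof eventually_elim
        case (elim \<omega>)
        then show ?case unfolding has_field_derivative_iff tendsto_at_iff_sequentially comp_def
          using X by blast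
      qed
      show "AE \<omega> in M. norm ((f (X i) \<omega> - f x \<omega>) / (X i - x)) \<le> L \<omega>" for i
        using lip
      proof eventually_elim
        case (elim \<omega>)
        have Xi: "X i \<in> S" "X i \<noteq> x" using X by auto
        then have pos: "0 < \<bar>X i - x\<bar>" by simp
        have "\<bar>f (X i) \<omega> - f x \<omega>\<bar> \<le> L \<omega> * \<bar>X i - x\<bar>" using elim Xi by auto
        then show ?case using pos by (simp add: abs_divide divide_le_eq)
      qed
    qed
    then show "(\<lambda>i. (integral\<^sup>L M (f (X i)) - integral\<^sup>L M (f x)) / (X i - x)) \<longlonglongrightarrow> integral\<^sup>L M f'"
      by (simp only: eq)
  qed
  then show ?thesis unfolding has_field_derivative_iff by simp
qed

context
  fixes P :: "real measure" and z C c :: "real \<Rightarrow> real" and \<beta> xbar :: real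
  assumes P_prob: "prob_space P" and P_borel: "sets P = sets borel"
    and P_int: "integrable P (\<lambda>q. q)"
    and z_meas: "z \<in> borel_measurable borel" and z_nn: "\<And>q. 0 \<le> z q"
    and z_noat: "\<And>u. 0 < u \<Longrightarrow> AE q in P. z q \<noteq> u"
    and beta: "0 < \<beta>" "\<beta> < 1"
    and C_deriv: "\<forall>x\<ge>0. (C has_real_derivative c x) (at x within {0..})"
    and c_cont: "continuous_on {0..} c"
    and xbar: "0 \<le> xbar"
begin

abbreviation "\<Omega> \<equiv> Pi\<^sub>M UNIV (\<lambda>_::nat. P)"

lemma Om_prob: "prob_space \<Omega>"
  by (rule prob_space_PiM) (rule P_prob)

lemma om_measP: "(\<lambda>\<omega>. \<omega> t) \<in> measurable \<Omega> P"
  by (rule measurable_component_singleton) simp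

lemma om_meas[measurable]: "(\<lambda>\<omega>. \<omega> t) \<in> borel_measurable \<Omega>"
  using om_measP measurable_cong_sets[OF refl P_borel] by blast

lemma zom_meas[measurable]: "(\<lambda>\<omega>. z (\<omega> t)) \<in> borel_measurable \<Omega>"
  using measurable_compose[OF om_meas z_meas] .

primrec T :: "nat \<Rightarrow> real \<Rightarrow> (nat \<Rightarrow> real) \<Rightarrow> real" where
  "T 0 x \<omega> = x"
| "T (Suc t) x \<omega> = min (T t x \<omega>) (z (\<omega> t))"

primrec D :: "nat \<Rightarrow> real \<Rightarrow> (nat \<Rightarrow> real) \<Rightarrow> real" where
  "D 0 x \<omega> = 1"
| "D (Suc t) x \<omega> = (if x < z (\<omega> t) then D t x \<omega> else 0)"

lemma T_meas[measurable]: "(\<lambda>\<omega>. T t x \<omega>) \<in> borel_measurable \<Omega>"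
  by (induction t) auto

lemma D_meas[measurable]: "(\<lambda>\<omega>. D t x \<omega>) \<in> borel_measurable \<Omega>"
  by (induction t) auto

lemma traj_T: "traj (\<lambda>x q. min x (z q)) x \<omega> t = T t x \<omega>"
  by (induction t) auto

lemma T_bounds: "0 \<le> x \<Longrightarrow> 0 \<le> T t x \<omega> \<and> T t x \<omega> \<le> x"
  by (induction t) (auto simp: z_nn min_def)

lemma T_lip: "\<bar>T t a \<omega> - T t b \<omega>\<bar> \<le> \<bar>a - b\<bar>"
  by (induction t) (auto simp: min_def)

lemma D_01: "D t x \<omega> = 0 \<or> D t x \<omega> = 1"
  by (induction t) auto

lemma D_Suc1: "D (Suc t) x \<omega> = 1 \<Longrightarrow> D t x \<omega> = 1"
  by (auto split: if_splits)

lemma T_local: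
  assumes x: "0 \<le> x" and cond: "x = 0 \<or> (\<forall>s<t. z (\<omega> s) \<noteq> x)"
  shows "\<exists>e>0. \<forall>x'. 0 \<le> x' \<longrightarrow> \<bar>x' - x\<bar> < e \<longrightarrow>
           T t x' \<omega> = (if D t x \<omega> = 1 then x' else T t x \<omega>)"
  using cond
proof (induction t)
  case 0
  then show ?case by (intro exI[of _ 1]) auto
next
  case (Suc t)
  have "x = 0 \<or> (\<forall>s<t. z (\<omega> s) \<noteq> x)" using Suc.prems by (metis less_SucI)
  from Suc.IH[OF this] obtain e where e: "e > 0"
    and loc: "\<And>x'. 0 \<le> x' \<Longrightarrow> \<bar>x' - x\<bar> < e \<Longrightarrow> T t x' \<omega> = (if D t x \<omega> = 1 then x' else T t x \<omega>)"
    by blast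
  define k where "k = z (\<omega> t)"
  have k0: "0 \<le> k" by (simp add: k_def z_nn)
  show ?case
  proof (cases "D t x \<omega> = 1")
    case True
    have Tx: "T t x \<omega> = x" using loc[of x] x e True by simp
    consider "x < k" | "k < x" | "x = k" by linarith
    then show ?thesis
    proof cases
      case 1
      show ?thesis
        by (rule exI[of _ "min e (k - x)"]) (use 1 e loc True k_def in \<open>auto simp: min_def\<close>)
    next
      case 2
      show ?thesis
        by (rule exI[of _ "min e (x - k)"]) (use 2 e loc True Tx k_def in \<open>auto simp: min_def\<close>)
    next
      case 3
      then have "x = 0" using Suc.prems k_def by auto
      then have "k = 0" using 3 by simp
      show ?thesis
        by (rule exI[of _ e]) (use \<open>k = 0\<close> \<open>x = 0\<close> e loc True Tx k_def T_bounds in \<open>auto simp: min_def\<close>)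
    qed
  next
    case False
    then have "D (Suc t) x \<omega> \<noteq> 1" using D_Suc1 by blast
    then show ?thesis
      by (intro exI[of _ e]) (use e loc False in auto)
  qed
qed


lemma C_cont: "continuous_on {0..} C"
  by (rule DERIV_continuous_on) (use C_deriv in auto)

lemma Cm_meas: "(\<lambda>v. C (max 0 v)) \<in> borel_measurable borel"
  by (intro borel_measurable_continuous_onI continuous_on_compose2[OF C_cont]) (auto intro: continuous_intros)

lemma cm_meas: "(\<lambda>v. c (max 0 v)) \<in> borel_measurable borel"
  by (intro borel_measurable_continuous_onI continuous_on_compose2[OF c_cont]) (auto intro: continuous_intros)

definition Kc where "Kc = (SOME K. 0 < K \<and> (\<forall>v\<in>{0..xbar}. \<bar>c v\<bar> \<le> K))"
definition KC where "KC = (SOME K. 0 < K \<and> (\<forall>v\<in>{0..xbar}. \<bar>C v\<bar> \<le> K))"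

lemma Kc: "0 < Kc \<and> (\<forall>v\<in>{0..xbar}. \<bar>c v\<bar> \<le> Kc)"
proof -
  have "bounded (c ` {0..xbar})"
    by (intro compact_imp_bounded compact_continuous_image continuous_on_subset[OF c_cont]) auto
  then have "\<exists>K. 0 < K \<and> (\<forall>v\<in>{0..xbar}. \<bar>c v\<bar> \<le> K)" unfolding bounded_pos by auto
  then show ?thesis unfolding Kc_def by (rule someI_ex)
qed

lemma KC: "0 < KC \<and> (\<forall>v\<in>{0..xbar}. \<bar>C v\<bar> \<le> KC)"
proof -
  have "bounded (C ` {0..xbar})"
    by (intro compact_imp_bounded compact_continuous_image continuous_on_subset[OF C_cont]) auto
  then have "\<exists>K. 0 < K \<and> (\<forall>v\<in>{0..xbar}. \<bar>C v\<bar> \<le> K)" unfolding bounded_pos by auto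
  then show ?thesis unfolding KC_def by (rule someI_ex)
qed

lemma C_lip: "u \<in> {0..xbar} \<Longrightarrow> v \<in> {0..xbar} \<Longrightarrow> \<bar>C u - C v\<bar> \<le> Kc * \<bar>u - v\<bar>"
proof -
  assume uv: "u \<in> {0..xbar}" "v \<in> {0..xbar}"
  have d: "(C has_field_derivative c w) (at w within {0..xbar})" if "w \<in> {0..xbar}" for w
    by (rule DERIV_subset[of _ _ _ "{0..}"]) (use C_deriv that in auto)
  show ?thesis
    using field_differentiable_bound[of "{0..xbar}" C c Kc u v, OF _ d] Kc uv by auto
qed

definition ft :: "nat \<Rightarrow> real \<Rightarrow> (nat \<Rightarrow> real) \<Rightarrow> real" where
  "ft t a \<omega> = \<beta> ^ t * (\<omega> t * (T t a \<omega> - T (Suc t) a \<omega>) - C (T (Suc t) a \<omega>))"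

definition ftd :: "nat \<Rightarrow> real \<Rightarrow> (nat \<Rightarrow> real) \<Rightarrow> real" where
  "ftd t x \<omega> = \<beta> ^ t * (\<omega> t * (D t x \<omega> - D (Suc t) x \<omega>) - c (T (Suc t) x \<omega>) * D (Suc t) x \<omega>)"

lemma ft_meas[measurable]: "0 \<le> a \<Longrightarrow> (\<lambda>\<omega>. ft t a \<omega>) \<in> borel_measurable \<Omega>"
proof -
  assume a: "0 \<le> a"
  have m: "(\<lambda>\<omega>. C (max 0 (T (Suc t) a \<omega>))) \<in> borel_measurable \<Omega>"
    using measurable_compose[OF T_meas Cm_meas] .
  have "(\<lambda>\<omega>. \<beta> ^ t * (\<omega> t * (T t a \<omega> - T (Suc t) a \<omega>) - C (max 0 (T (Suc t) a \<omega>)))) \<in> borel_measurable \<Omega>"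
    using m by measurable
  moreover have "\<And>\<omega>. max 0 (T (Suc t) a \<omega>) = T (Suc t) a \<omega>" by (metis T_bounds[OF a] max.absorb2)
  ultimately show ?thesis unfolding ft_def by simp
qed

lemma ftd_meas[measurable]: "0 \<le> x \<Longrightarrow> (\<lambda>\<omega>. ftd t x \<omega>) \<in> borel_measurable \<Omega>"
proof -
  assume a: "0 \<le> x"
  have m: "(\<lambda>\<omega>. c (max 0 (T (Suc t) x \<omega>))) \<in> borel_measurable \<Omega>"
    using measurable_compose[OF T_meas cm_meas] .
  have "(\<lambda>\<omega>. \<beta> ^ t * (\<omega> t * (D t x \<omega> - D (Suc t) x \<omega>) - c (max 0 (T (Suc t) x \<omega>)) * D (Suc t) x \<omega>)) \<in> borel_measurable \<Omega>"
    using m by measurable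
  moreover have "\<And>\<omega>. max 0 (T (Suc t) x \<omega>) = T (Suc t) x \<omega>" by (metis T_bounds[OF a] max.absorb2)
  ultimately show ?thesis unfolding ftd_def by simp
qed

lemma f_deriv:
  assumes x: "x \<in> {0..xbar}" and cond: "x = 0 \<or> (\<forall>s<Suc t. z (\<omega> s) \<noteq> x)"
  shows "((\<lambda>a. ft t a \<omega>) has_field_derivative ftd t x \<omega>) (at x within {0..xbar})"
proof -
  have x0: "0 \<le> x" using x by simp
  have c1: "x = 0 \<or> (\<forall>s<t. z (\<omega> s) \<noteq> x)" using cond by (metis less_SucI)
  obtain e1 where e1: "e1 > 0" and l1: "\<And>x'. 0 \<le> x' \<Longrightarrow> \<bar>x' - x\<bar> < e1 \<Longrightarrow>
      T t x' \<omega> = (if D t x \<omega> = 1 then x' else T t x \<omega>)"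
    using T_local[OF x0 c1] by blast
  obtain e2 where e2: "e2 > 0" and l2: "\<And>x'. 0 \<le> x' \<Longrightarrow> \<bar>x' - x\<bar> < e2 \<Longrightarrow>
      T (Suc t) x' \<omega> = (if D (Suc t) x \<omega> = 1 then x' else T (Suc t) x \<omega>)"
    using T_local[OF x0 cond] by blast
  define A where "A a = (if D t x \<omega> = 1 then a else T t x \<omega>)" for a
  define B where "B a = (if D (Suc t) x \<omega> = 1 then a else T (Suc t) x \<omega>)" for a
  define g where "g a = \<beta> ^ t * (\<omega> t * (A a - B a) - C (B a))" for a
  have dg: "(g has_field_derivative ftd t x \<omega>) (at x within {0..xbar})"
  proof (cases "D (Suc t) x \<omega> = 1")
    case True
    then have Dt: "D t x \<omega> = 1" by (rule D_Suc1)
    have g: "g = (\<lambda>a. - (\<beta> ^ t * C a))" using True Dt by (auto simp: g_def A_def B_def fun_eq_iff)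
    have TS: "T (Suc t) x \<omega> = x" using l2[of x] True e2 x0 by simp
    have dC: "(C has_field_derivative c x) (at x within {0..xbar})"
      using C_deriv x by (auto intro: DERIV_subset)
    have e: "ftd t x \<omega> = - (\<beta> ^ t * c x)" using True Dt TS by (simp add: ftd_def)
    show ?thesis unfolding g e by (intro DERIV_minus DERIV_cmult dC)
  next
    case False
    then have DS: "D (Suc t) x \<omega> = 0" using D_01 by blast
    show ?thesis
    proof (cases "D t x \<omega> = 1")
      case True
      have g: "g = (\<lambda>a. \<beta> ^ t * (\<omega> t * (a - T (Suc t) x \<omega>) - C (T (Suc t) x \<omega>)))"
        using True DS by (auto simp: g_def A_def B_def fun_eq_iff)
      have "ftd t x \<omega> = \<beta> ^ t * (\<omega> t * (1 - 0) - 0)" using True DS by (simp add: ftd_def)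
      then show ?thesis unfolding g by (auto intro!: derivative_eq_intros)
    next
      case False
      then have Dt: "D t x \<omega> = 0" using D_01 by blast
      have g: "g = (\<lambda>a. \<beta> ^ t * (\<omega> t * (T t x \<omega> - T (Suc t) x \<omega>) - C (T (Suc t) x \<omega>)))"
        using Dt DS by (auto simp: g_def A_def B_def fun_eq_iff)
      have "ftd t x \<omega> = 0" using Dt DS by (simp add: ftd_def)
      then show ?thesis unfolding g by (auto intro!: derivative_eq_intros)
    qed
  qed
  show ?thesis
  proof (rule has_field_derivative_transform_within[OF dg, of "min e1 e2"])
    show "0 < min e1 e2" using e1 e2 by simp
    show "x \<in> {0..xbar}" by fact
    fix a assume a: "a \<in> {0..xbar}" "dist a x < min e1 e2"
    then have "T t a \<omega> = A a" "T (Suc t) a \<omega> = B a"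
      using l1[of a] l2[of a] by (auto simp: A_def B_def dist_real_def)
    then show "g a = ft t a \<omega>" by (simp add: g_def ft_def)
  qed
qed

lemma f_lip:
  assumes a: "a \<in> {0..xbar}" and b: "b \<in> {0..xbar}"
  shows "\<bar>ft t a \<omega> - ft t b \<omega>\<bar> \<le> \<beta> ^ t * (2 * \<bar>\<omega> t\<bar> + Kc) * \<bar>a - b\<bar>"
proof -
  define Ta Tb Sa Sb where "Ta = T t a \<omega>" "Tb = T t b \<omega>" "Sa = T (Suc t) a \<omega>" "Sb = T (Suc t) b \<omega>"
  have l1: "\<bar>Ta - Tb\<bar> \<le> \<bar>a - b\<bar>" "\<bar>Sa - Sb\<bar> \<le> \<bar>a - b\<bar>"
    unfolding Ta_Tb_Sa_Sb_def by (rule T_lip)+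
  have Sab: "Sa \<in> {0..xbar}" "Sb \<in> {0..xbar}"
    using T_bounds[of a "Suc t" \<omega>] T_bounds[of b "Suc t" \<omega>] a b unfolding Ta_Tb_Sa_Sb_def by auto
  have l2: "\<bar>C Sa - C Sb\<bar> \<le> Kc * \<bar>a - b\<bar>"
    using C_lip[OF Sab] l1(2) Kc by (meson less_imp_le mult_left_mono order_trans)
  have "(Ta - Sa) - (Tb - Sb) = (Ta - Tb) - (Sa - Sb)" by simp
  then have "\<bar>(Ta - Sa) - (Tb - Sb)\<bar> \<le> \<bar>Ta - Tb\<bar> + \<bar>Sa - Sb\<bar>" by (metis abs_triangle_ineq4)
  also have "\<dots> \<le> \<bar>a - b\<bar> + \<bar>a - b\<bar>" using l1 by (rule add_mono)
  finally have l3: "\<bar>(Ta - Sa) - (Tb - Sb)\<bar> \<le> 2 * \<bar>a - b\<bar>" by simp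
  have l4: "\<bar>\<omega> t * ((Ta - Sa) - (Tb - Sb))\<bar> \<le> \<bar>\<omega> t\<bar> * (2 * \<bar>a - b\<bar>)"
    unfolding abs_mult by (rule mult_left_mono[OF l3]) simp
  have "ft t a \<omega> - ft t b \<omega> = \<beta> ^ t * (\<omega> t * ((Ta - Sa) - (Tb - Sb)) - (C Sa - C Sb))"
    unfolding ft_def Ta_Tb_Sa_Sb_def by (simp add: algebra_simps)
  also have "\<bar>\<dots>\<bar> = \<beta> ^ t * \<bar>\<omega> t * ((Ta - Sa) - (Tb - Sb)) - (C Sa - C Sb)\<bar>"
    using beta by (simp add: abs_mult)
  also have "\<dots> \<le> \<beta> ^ t * (\<bar>\<omega> t\<bar> * (2 * \<bar>a - b\<bar>) + Kc * \<bar>a - b\<bar>)"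
    using l2 l4 beta by (intro mult_left_mono) (auto intro: order_trans[OF abs_triangle_ineq4])
  also have "\<dots> = \<beta> ^ t * (2 * \<bar>\<omega> t\<bar> + Kc) * \<bar>a - b\<bar>" by (simp add: algebra_simps)
  finally show ?thesis .
qed

lemma ft_bound:
  assumes a: "a \<in> {0..xbar}"
  shows "\<bar>ft t a \<omega>\<bar> \<le> \<beta> ^ t * (\<bar>\<omega> t\<bar> * xbar + KC)"
proof -
  define Ta Sa where "Ta = T t a \<omega>" "Sa = T (Suc t) a \<omega>"
  have b: "0 \<le> Sa" "Sa \<le> Ta" "Ta \<le> xbar"
    using T_bounds[of a "Suc t" \<omega>] T_bounds[of a t \<omega>] a unfolding Ta_Sa_def by auto
  have "\<bar>C Sa\<bar> \<le> KC" using KC b by auto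
  moreover have "\<bar>\<omega> t * (Ta - Sa)\<bar> \<le> \<bar>\<omega> t\<bar> * xbar"
    unfolding abs_mult using b by (intro mult_left_mono) auto
  ultimately have "\<bar>\<omega> t * (Ta - Sa) - C Sa\<bar> \<le> \<bar>\<omega> t\<bar> * xbar + KC" by linarith
  then have "\<beta> ^ t * \<bar>\<omega> t * (Ta - Sa) - C Sa\<bar> \<le> \<beta> ^ t * (\<bar>\<omega> t\<bar> * xbar + KC)"
    using beta by (intro mult_left_mono) auto
  then show ?thesis unfolding ft_def Ta_Sa_def using beta by (simp add: abs_mult)
qed

lemma ftd_bound:
  assumes x: "x \<in> {0..xbar}"
  shows "\<bar>ftd t x \<omega>\<bar> \<le> \<beta> ^ t * (\<bar>\<omega> t\<bar> + Kc)"
proof -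
  define Sa where "Sa = T (Suc t) x \<omega>"
  have b: "0 \<le> Sa" "Sa \<le> xbar"
    using T_bounds[of x "Suc t" \<omega>] x unfolding Sa_def by auto
  have "\<bar>c Sa\<bar> \<le> Kc" using Kc b by auto
  moreover have "\<bar>D t x \<omega> - D (Suc t) x \<omega>\<bar> \<le> 1" "\<bar>D (Suc t) x \<omega>\<bar> \<le> 1"
    using D_01[of t x \<omega>] D_01[of "Suc t" x \<omega>] by auto
  ultimately have "\<bar>c Sa * D (Suc t) x \<omega>\<bar> \<le> Kc" 
    and "\<bar>\<omega> t * (D t x \<omega> - D (Suc t) x \<omega>)\<bar> \<le> \<bar>\<omega> t\<bar>"
    unfolding abs_mult by (auto intro: mult_le_one mult_left_le order_trans[OF mult_left_mono])
  then have "\<bar>\<omega> t * (D t x \<omega> - D (Suc t) x \<omega>) - c Sa * D (Suc t) x \<omega>\<bar> \<le> \<bar>\<omega> t\<bar> + Kc" by linarith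
  then have "\<beta> ^ t * \<bar>\<omega> t * (D t x \<omega> - D (Suc t) x \<omega>) - c Sa * D (Suc t) x \<omega>\<bar> \<le> \<beta> ^ t * (\<bar>\<omega> t\<bar> + Kc)"
    using beta by (intro mult_left_mono) auto
  then show ?thesis unfolding ftd_def Sa_def using beta by (simp add: abs_mult)
qed


definition AP where "AP = (\<integral>q. \<bar>q\<bar> \<partial>P)"

lemma AP_nn: "0 \<le> AP" unfolding AP_def by simp

lemma om_int: "integrable \<Omega> (\<lambda>\<omega>. \<omega> t)" and om_abs_int: "integrable \<Omega> (\<lambda>\<omega>. \<bar>\<omega> t\<bar>)"
  and om_abs_integral: "(\<integral>\<omega>. \<bar>\<omega> t\<bar> \<partial>\<Omega>) = AP"
proof -
  have dP: "distr \<Omega> P (\<lambda>\<omega>. \<omega> t) = P" using distr_PiM_component[of UNIV "\<lambda>_. P" t] P_prob by simp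
  have idm: "(\<lambda>q::real. q) \<in> borel_measurable P" by (rule measurable_ident_sets[OF P_borel])
  have absm: "(\<lambda>q::real. \<bar>q\<bar>) \<in> borel_measurable P" using idm by measurable
  have "integrable (distr \<Omega> P (\<lambda>\<omega>. \<omega> t)) (\<lambda>q. q)" using dP P_int by simp
  then show "integrable \<Omega> (\<lambda>\<omega>. \<omega> t)" using integrable_distr_eq[OF om_measP idm] by simp
  then show "integrable \<Omega> (\<lambda>\<omega>. \<bar>\<omega> t\<bar>)" by (rule integrable_abs)
  show "(\<integral>\<omega>. \<bar>\<omega> t\<bar> \<partial>\<Omega>) = AP"
    using integral_distr[OF om_measP[of t] absm] dP unfolding AP_def by simp
qed

lemma Om_const: "(\<integral>\<omega>. (k::real) \<partial>\<Omega>) = k"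
proof -
  interpret O: prob_space \<Omega> by (rule Om_prob)
  show ?thesis by (simp add: O.prob_space)
qed

lemma Om_const_int: "integrable \<Omega> (\<lambda>\<omega>. (k::real))"
proof -
  interpret O: prob_space \<Omega> by (rule Om_prob)
  show ?thesis by simp
qed

lemma bound_int: "integrable \<Omega> (\<lambda>\<omega>. \<beta> ^ t * (\<bar>\<omega> t\<bar> * k1 + k2))"
  using om_abs_int Om_const_int by (intro integrable_mult_right integrable_add integrable_mult_left) auto

lemma bound_integral: "(\<integral>\<omega>. \<beta> ^ t * (\<bar>\<omega> t\<bar> * k1 + k2) \<partial>\<Omega>) = \<beta> ^ t * (AP * k1 + k2)"
  using om_abs_int Om_const_int om_abs_integral Om_const by (simp add: integral_add)

lemma ft_int: "a \<in> {0..xbar} \<Longrightarrow> integrable \<Omega> (\<lambda>\<omega>. ft t a \<omega>)"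
  by (rule Bochner_Integration.integrable_bound[OF bound_int[of t xbar KC]]) (use ft_bound KC beta in \<open>auto intro!: AE_I2 order_trans[OF ft_bound]\<close>)

lemma ftd_int: "x \<in> {0..xbar} \<Longrightarrow> integrable \<Omega> (\<lambda>\<omega>. ftd t x \<omega>)"
  by (rule Bochner_Integration.integrable_bound[OF bound_int[of t 1 Kc]]) (use ftd_bound Kc beta in \<open>auto intro!: AE_I2 order_trans[OF ftd_bound]\<close>)

lemma g_deriv:
  assumes x: "x \<in> {0..xbar}"
  shows "((\<lambda>a. \<integral>\<omega>. ft t a \<omega> \<partial>\<Omega>) has_field_derivative (\<integral>\<omega>. ftd t x \<omega> \<partial>\<Omega>)) (at x within {0..xbar})"
proof (rule deriv_under_integral[where L="\<lambda>\<omega>. \<beta> ^ t * (\<bar>\<omega> t\<bar> * 2 + Kc)"])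
  show "x \<in> {0..xbar}" by fact
  show "integrable \<Omega> (\<lambda>\<omega>. ft t a \<omega>)" if "a \<in> {0..xbar}" for a using ft_int that .
  show "integrable \<Omega> (\<lambda>\<omega>. \<beta> ^ t * (\<bar>\<omega> t\<bar> * 2 + Kc))" by (rule bound_int)
  show "(\<lambda>\<omega>. ftd t x \<omega>) \<in> borel_measurable \<Omega>" by (rule ftd_meas) (use x in simp)
  have cond: "AE \<omega> in \<Omega>. x = 0 \<or> (\<forall>s<Suc t. z (\<omega> s) \<noteq> x)"
  proof (cases "x = 0")
    case True then show ?thesis by simp
  next
    case False
    then have xp: "0 < x" using x by simp
    have "AE \<omega> in \<Omega>. \<forall>s\<in>{..<Suc t}. z (\<omega> s) \<noteq> x"
      by (rule eventually_ball_finite) (auto intro!: AE_PiM_component P_prob z_noat xp)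
    then show ?thesis by (rule AE_mp) auto
  qed
  then show "AE \<omega> in \<Omega>. ((\<lambda>a. ft t a \<omega>) has_field_derivative ftd t x \<omega>) (at x within {0..xbar})"
    by (rule AE_mp) (use x xbar in \<open>auto intro!: AE_I2 f_deriv\<close>)
  show "AE \<omega> in \<Omega>. \<forall>a\<in>{0..xbar}. \<bar>ft t a \<omega> - ft t x \<omega>\<bar> \<le> \<beta> ^ t * (\<bar>\<omega> t\<bar> * 2 + Kc) * \<bar>a - x\<bar>"
    using f_lip x by (intro AE_I2) (auto simp: mult.commute)
qed

lemma gd_bound:
  assumes x: "x \<in> {0..xbar}"
  shows "\<bar>\<integral>\<omega>. ftd t x \<omega> \<partial>\<Omega>\<bar> \<le> \<beta> ^ t * (AP + Kc)"
proof -
  have "\<bar>\<integral>\<omega>. ftd t x \<omega> \<partial>\<Omega>\<bar> \<le> (\<integral>\<omega>. norm (ftd t x \<omega>) \<partial>\<Omega>)"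
    using integral_norm_bound[of \<Omega> "\<lambda>\<omega>. ftd t x \<omega>"] by simp
  also have "\<dots> \<le> (\<integral>\<omega>. \<beta> ^ t * (\<bar>\<omega> t\<bar> * 1 + Kc) \<partial>\<Omega>)"
    by (rule integral_mono[OF integrable_norm[OF ftd_int[OF x]] bound_int]) (use ftd_bound[OF x] in simp)
  also have "\<dots> = \<beta> ^ t * (AP * 1 + Kc)" by (rule bound_integral)
  finally show ?thesis by simp
qed

lemma AE_sum: "AE \<omega> in \<Omega>. summable (\<lambda>t. \<beta> ^ t * \<bar>\<omega> t\<bar>)"
proof -
  have meas: "\<And>t. (\<lambda>\<omega>. ennreal (\<beta> ^ t * \<bar>\<omega> t\<bar>)) \<in> borel_measurable \<Omega>" by measurable
  have sg: "summable (\<lambda>t. \<beta> ^ t * AP)"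
    using beta by (intro summable_mult2 summable_geometric) auto
  have "(\<integral>\<^sup>+\<omega>. (\<Sum>t. ennreal (\<beta> ^ t * \<bar>\<omega> t\<bar>)) \<partial>\<Omega>) = (\<Sum>t. \<integral>\<^sup>+\<omega>. ennreal (\<beta> ^ t * \<bar>\<omega> t\<bar>) \<partial>\<Omega>)"
    by (rule nn_integral_suminf[OF meas])
  also have "\<dots> = (\<Sum>t. ennreal (\<beta> ^ t * AP))"
  proof (rule suminf_cong)
    fix t
    have "(\<integral>\<^sup>+\<omega>. ennreal (\<beta> ^ t * \<bar>\<omega> t\<bar>) \<partial>\<Omega>) = ennreal (\<integral>\<omega>. \<beta> ^ t * \<bar>\<omega> t\<bar> \<partial>\<Omega>)"
      by (rule nn_integral_eq_integral) (use om_abs_int beta in auto)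
    also have "(\<integral>\<omega>. \<beta> ^ t * \<bar>\<omega> t\<bar> \<partial>\<Omega>) = \<beta> ^ t * AP" using om_abs_integral by simp
    finally show "(\<integral>\<^sup>+\<omega>. ennreal (\<beta> ^ t * \<bar>\<omega> t\<bar>) \<partial>\<Omega>) = ennreal (\<beta> ^ t * AP)" .
  qed
  also have "\<dots> = ennreal (\<Sum>t. \<beta> ^ t * AP)"
    by (rule suminf_ennreal2) (use sg beta AP_nn in auto)
  finally have fin: "(\<integral>\<^sup>+\<omega>. (\<Sum>t. ennreal (\<beta> ^ t * \<bar>\<omega> t\<bar>)) \<partial>\<Omega>) \<noteq> \<infinity>" by simp
  have "AE \<omega> in \<Omega>. (\<Sum>t. ennreal (\<beta> ^ t * \<bar>\<omega> t\<bar>)) \<noteq> \<infinity>"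
    by (rule nn_integral_PInf_AE[OF _ fin]) measurable
  then show ?thesis
  proof eventually_elim
    case (elim \<omega>)
    show ?case by (rule summable_suminf_not_top) (use elim beta in auto)
  qed
qed

lemma Vmin_sum:
  assumes x: "x \<in> {0..xbar}"
  shows "Vbar C \<beta> P (\<lambda>x q. min x (z q)) x = (\<Sum>t. \<integral>\<omega>. ft t x \<omega> \<partial>\<Omega>)"
    and "summable (\<lambda>t. \<integral>\<omega>. ft t x \<omega> \<partial>\<Omega>)"
proof -
  have i: "\<And>t. integrable \<Omega> (\<lambda>\<omega>. ft t x \<omega>)" using ft_int x by blast
  have s1: "AE \<omega> in \<Omega>. summable (\<lambda>t. norm (ft t x \<omega>))"
    using AE_sum
  proof eventually_elim
    case (elim \<omega>)
    have "summable (\<lambda>t. \<beta> ^ t * \<bar>\<omega> t\<bar> * xbar + \<beta> ^ t * KC)"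
      using elim beta by (intro summable_add summable_mult2 summable_geometric) auto
    then show ?case
      by (rule summable_comparison_test'[where N=0]) (use ft_bound[OF x] in \<open>simp add: algebra_simps\<close>)
  qed
  have s2: "summable (\<lambda>t. \<integral>\<omega>. norm (ft t x \<omega>) \<partial>\<Omega>)"
  proof (rule summable_comparison_test'[where N=0])
    show "summable (\<lambda>t. \<beta> ^ t * (AP * xbar + KC))"
      using beta by (intro summable_mult2 summable_geometric) auto
    fix t
    have "(\<integral>\<omega>. norm (ft t x \<omega>) \<partial>\<Omega>) \<le> (\<integral>\<omega>. \<beta> ^ t * (\<bar>\<omega> t\<bar> * xbar + KC) \<partial>\<Omega>)"
      by (rule integral_mono[OF integrable_norm[OF i] bound_int]) (use ft_bound[OF x] in simp)
    also have "\<dots> = \<beta> ^ t * (AP * xbar + KC)" by (rule bound_integral)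
    finally show "norm (\<integral>\<omega>. norm (ft t x \<omega>) \<partial>\<Omega>) \<le> \<beta> ^ t * (AP * xbar + KC)"
      by (simp add: bound_integral)
  qed
  have "Vbar C \<beta> P (\<lambda>x q. min x (z q)) x = (\<integral>\<omega>. (\<Sum>t. ft t x \<omega>) \<partial>\<Omega>)"
    unfolding Vbar_def ft_def traj_T by simp
  also have "\<dots> = (\<Sum>t. \<integral>\<omega>. ft t x \<omega> \<partial>\<Omega>)"
    by (rule integral_suminf[OF i s1 s2])
  finally show "Vbar C \<beta> P (\<lambda>x q. min x (z q)) x = (\<Sum>t. \<integral>\<omega>. ft t x \<omega> \<partial>\<Omega>)" .
  show "summable (\<lambda>t. \<integral>\<omega>. ft t x \<omega> \<partial>\<Omega>)"
    by (rule summable_integral[OF i s1 s2])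
qed

lemma traj_min:
  assumes y: "\<And>x q. 0 \<le> x \<Longrightarrow> y x q = min x (z q)" and a: "0 \<le> a"
  shows "traj y a \<omega> t = T t a \<omega>"
proof (induction t)
  case (Suc t)
  then show ?case using y T_bounds[OF a, of t \<omega>] by simp
qed simp

lemma main_generic:
  assumes x: "x \<in> {0..xbar}" and y: "\<And>x q. 0 \<le> x \<Longrightarrow> y x q = min x (z q)"
  shows "Vbar C \<beta> P y differentiable (at x within {0..xbar})"
proof -
  define g where "g t a = (\<integral>\<omega>. ft t a \<omega> \<partial>\<Omega>)" for t a
  define gd where "gd t a = (\<integral>\<omega>. ftd t a \<omega> \<partial>\<Omega>)" for t a
  have "\<exists>G. \<forall>x\<in>{0..xbar}. (\<lambda>n. g n x) sums G x \<and>
           (G has_field_derivative (\<Sum>i. gd i x)) (at x within {0..xbar})"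
    apply (rule has_field_derivative_series[of "{0..xbar}" g gd _ x])
    subgoal by (rule convex_real_interval)
    subgoal for n a unfolding g_def gd_def by (rule g_deriv) 
    subgoal
      apply (rule Weierstrass_m_test[where M="\<lambda>n. \<beta> ^ n * (AP + Kc)"])
      subgoal for n a unfolding gd_def using gd_bound[of a n] by simp
      using beta by (intro summable_mult2 summable_geometric) auto
    subgoal by (rule x)
    subgoal unfolding g_def by (rule Vmin_sum(2)[OF x])
    done
  then obtain G where G: "\<And>a. a \<in> {0..xbar} \<Longrightarrow> (\<lambda>n. g n a) sums G a"
    and dG: "(G has_field_derivative (\<Sum>i. gd i x)) (at x within {0..xbar})" using x by blast
  have eq: "G a = Vbar C \<beta> P y a" if a: "a \<in> {0..xbar}" for a
  proof -
    have "Vbar C \<beta> P y a = Vbar C \<beta> P (\<lambda>x q. min x (z q)) a"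
    proof -
      have "\<And>\<omega> t. traj y a \<omega> t = traj (\<lambda>x q. min x (z q)) a \<omega> t"
        using traj_min[OF y] traj_T a by simp
      then show ?thesis unfolding Vbar_def by (simp only:)
    qed
    also have "\<dots> = G a" using Vmin_sum(1)[OF a] G[OF a] sums_unique unfolding g_def by metis
    finally show ?thesis by simp
  qed
  have "(Vbar C \<beta> P y has_field_derivative (\<Sum>i. gd i x)) (at x within {0..xbar})"
    by (rule has_field_derivative_transform_within[OF dG zero_less_one x]) (use eq in auto)
  then show ?thesis
    using has_field_derivative_imp_has_derivative differentiableI by blast
qed

end


lemma final_h:
  fixes \<beta> xbar :: real and C c h :: "real \<Rightarrow> real" and P :: "real measure"
  assumes beta: "0 < \<beta>" "\<beta> < 1"
    and xbar: "0 \<le> xbar"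
    and C_sconv: "strictly_convex_on {0..} C"
    and C_deriv: "\<forall>x\<ge>0. (C has_real_derivative c x) (at x within {0..})"
    and c_cont: "continuous_on {0..} c"
    and c_lim: "filterlim c at_top at_top"
    and P_prob: "prob_space P"
    and P_borel: "sets P = sets borel"
    and P_mean: "integrable P (\<lambda>q. q)"
    and P_noatom: "\<forall>q. measure P {q} = 0"
    and h_meas: "h \<in> borel_measurable borel"
    and h_anti: "\<And>a b. a < b \<Longrightarrow> h b < h a"
    and x: "x \<in> {0..xbar}"
  shows "Vbar C \<beta> P (\<lambda>x q. cinv c (proj (c 0) (c x) (h q))) differentiable (at x within {0..xbar})"
proof -
  have cs: "\<And>a b. 0 \<le> a \<Longrightarrow> a < b \<Longrightarrow> c a < c b" using c_strict[OF C_sconv C_deriv c_cont] by blast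
  show ?thesis
  proof (rule main_generic[where P=P and z="\<lambda>q. wf c (h q)" and C=C and c=c and \<beta>=\<beta> and xbar=xbar])
    show "prob_space P" by fact
    show "sets P = sets borel" by fact
    show "integrable P (\<lambda>q. q)" by fact
    show "(\<lambda>q. wf c (h q)) \<in> borel_measurable borel"
      using measurable_compose[OF h_meas wf_meas[OF cs c_cont c_lim]] by simp
    show "0 \<le> wf c (h q)" for q by (rule wf_ge[OF cs c_cont c_lim])
    show "AE q in P. wf c (h q) \<noteq> u" if u: "0 < u" for u
    proof -
      have "AE q in P. h q \<noteq> c u"
        by (rule AE_noteq_antimono[OF P_prob P_borel P_noatom h_anti])
      then show ?thesis
        by (rule AE_mp) (use wf_atom[OF cs c_cont c_lim u] in auto)
    qed
    show "0 < \<beta>" "\<beta> < 1" by fact+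
    show "\<forall>x\<ge>0. (C has_real_derivative c x) (at x within {0..})" by fact
    show "continuous_on {0..} c" by fact
    show "0 \<le> xbar" by fact
    show "x \<in> {0..xbar}" by fact
    show "cinv c (proj (c 0) (c x') (h q)) = min x' (wf c (h q))" if "0 \<le> x'" for x' q
      by (rule proj_eq[OF cs c_cont c_lim that])
  qed
qed

theorem lemma3:
  fixes \<beta> xbar :: real and C c :: "real \<Rightarrow> real" and P :: "real measure"
    and N :: nat and ps :: "nat \<Rightarrow> real"
  assumes beta: "0 < \<beta>" "\<beta> < 1"
    and xbar: "0 \<le> xbar"
    and C_nonneg: "\<forall>x\<ge>0. C x \<ge> 0"
    and C_incr: "mono_on {0..} C"
    and C_sconv: "strictly_convex_on {0..} C"
    and C_deriv: "\<forall>x\<ge>0. (C has_real_derivative c x) (at x within {0..})"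
    and c_cont: "continuous_on {0..} c"
    and c_lim: "filterlim c at_top at_top"
    and P_prob: "prob_space P"
    and P_borel: "sets P = sets borel"
    and P_nonneg: "AE q in P. 0 \<le> q"
    and P_mean: "integrable P (\<lambda>q. q)"
    and P_noatom: "\<forall>q. measure P {q} = 0"
    and N_pos: "1 \<le> N"
    and ps_nonneg: "\<forall>i\<in>{1..N}. 0 \<le> ps i"
  shows "(\<forall>x\<in>{0..xbar}. Vbar C \<beta> P (y_S c \<beta> N ps) differentiable (at x within {0..xbar}))
       \<and> (\<forall>x\<in>{0..xbar}. Vbar C \<beta> P (y_M c \<beta> N ps) differentiable (at x within {0..xbar}))"
proof (intro conjI ballI)
  fix x assume x: "x \<in> {0..xbar}"
  define hS where "hS q = \<beta> * ((1 / real N) * (\<Sum>i=1..N. max (ps i - q) 0)) - (1 - \<beta>) * q" for q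
  have yS: "y_S c \<beta> N ps = (\<lambda>x q. cinv c (proj (c 0) (c x) (hS q)))"
    by (simp add: fun_eq_iff y_S_def hS_def)
  have hSm: "hS \<in> borel_measurable borel" unfolding hS_def by measurable
  have hSa: "hS b < hS a" if ab: "a < b" for a b
  proof -
    have "(\<Sum>i=1..N. max (ps i - b) 0) \<le> (\<Sum>i=1..N. max (ps i - a) 0)"
      using ab by (intro sum_mono) auto
    then have "\<beta> * ((1 / real N) * (\<Sum>i=1..N. max (ps i - b) 0)) \<le> \<beta> * ((1 / real N) * (\<Sum>i=1..N. max (ps i - a) 0))"
      using beta by (intro mult_left_mono) auto
    moreover have "(1 - \<beta>) * a < (1 - \<beta>) * b" using beta ab by simp
    ultimately show ?thesis unfolding hS_def by linarith
  qed
  show "Vbar C \<beta> P (y_S c \<beta> N ps) differentiable (at x within {0..xbar})"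
    unfolding yS by (rule final_h[OF beta xbar C_sconv C_deriv c_cont c_lim P_prob P_borel P_mean P_noatom hSm hSa x])
next
  fix x assume x: "x \<in> {0..xbar}"
  define hM where "hM q = \<beta> * max (mu_N N ps - q) 0 - (1 - \<beta>) * q" for q
  have yM: "y_M c \<beta> N ps = (\<lambda>x q. cinv c (proj (c 0) (c x) (hM q)))"
    by (simp add: fun_eq_iff y_M_def hM_def)
  have hMm: "hM \<in> borel_measurable borel" unfolding hM_def by measurable
  have hMa: "hM b < hM a" if ab: "a < b" for a b
  proof -
    have "\<beta> * max (mu_N N ps - b) 0 \<le> \<beta> * max (mu_N N ps - a) 0"
      using beta ab by (intro mult_left_mono) auto
    moreover have "(1 - \<beta>) * a < (1 - \<beta>) * b" using beta ab by simp
    ultimately show ?thesis unfolding hM_def by linarith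
  qed
  show "Vbar C \<beta> P (y_M c \<beta> N ps) differentiable (at x within {0..xbar})"
    unfolding yM by (rule final_h[OF beta xbar C_sconv C_deriv c_cont c_lim P_prob P_borel P_mean P_noatom hMm hMa x])
qed

end
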